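(* Let $k\ge 3$ and let $D$ be a digraph on $n$ vertices with $\delta^0(D)\ge\lceil (n+k)/2\rceil-1$. Let $S=(s_1,\dots,s_k)$ be a sequence of distinct vertices of $D$, let $C$ be a longest $S$-cycle in $D$, suppose $C$ is not Hamiltonian, and let $H$ be the subdigraph of $D$ induced by $V(D)\setminus V(C)$. Let $F$ be the set of vertices of $C$ which receive an edge from some vertex of $H$, and $T$ the set of vertices of $C$ which send an edge to some vertex of $H$. Then no vertex of $C$ which lies in $T$ has its successor on $C$ in $F$.
   Context: Digraphs have no loops and at most one edge in each direction between any two vertices; paths and cycles are directed. $\delta^0(D)=\min\{\delta^+(D),\delta^-(D)\}$. An $S$-cycle is a directed cycle in $D$ encountering $s_1,\dots,s_k$ in this order. The successor of $x$ on $C$ is the vertex following $x$ along the direction of $C$. *)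

theory Defs
  imports Complex_Main "HOL-Library.Sublist"
begin

text \<open>A digraph: finite vertex set V, edge relation E with no loops, edges inside V.
  At most one edge in each direction is automatic for a relation.\<close>
definition digraph :: "'a set \<Rightarrow> ('a \<Rightarrow> 'a \<Rightarrow> bool) \<Rightarrow> bool" where
  "digraph V E \<longleftrightarrow> finite V \<and> (\<forall>u v. E u v \<longrightarrow> u \<in> V \<and> v \<in> V \<and> u \<noteq> v)"

definition outdeg :: "'a set \<Rightarrow> ('a \<Rightarrow> 'a \<Rightarrow> bool) \<Rightarrow> 'a \<Rightarrow> nat" where
  "outdeg V E v = card {u \<in> V. E v u}"

definition indeg :: "'a set \<Rightarrow> ('a \<Rightarrow> 'a \<Rightarrow> bool) \<Rightarrow> 'a \<Rightarrow> nat" where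
  "indeg V E v = card {u \<in> V. E u v}"

definition min_semideg_ge :: "'a set \<Rightarrow> ('a \<Rightarrow> 'a \<Rightarrow> bool) \<Rightarrow> int \<Rightarrow> bool" where
  "min_semideg_ge V E d \<longleftrightarrow> (\<forall>v\<in>V. d \<le> int (outdeg V E v) \<and> d \<le> int (indeg V E v))"

definition succ_idx :: "'a list \<Rightarrow> nat \<Rightarrow> 'a" where
  "succ_idx C i = C ! ((i + 1) mod length C)"

definition is_cycle :: "'a set \<Rightarrow> ('a \<Rightarrow> 'a \<Rightarrow> bool) \<Rightarrow> 'a list \<Rightarrow> bool" where
  "is_cycle V E C \<longleftrightarrow> 2 \<le> length C \<and> distinct C \<and> set C \<subseteq> V \<and>
     (\<forall>i < length C. E (C ! i) (succ_idx C i))"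

text \<open>An S-cycle: a directed cycle encountering s_1,...,s_k in this (cyclic) order.\<close>
definition is_S_cycle :: "'a set \<Rightarrow> ('a \<Rightarrow> 'a \<Rightarrow> bool) \<Rightarrow> 'a list \<Rightarrow> 'a list \<Rightarrow> bool" where
  "is_S_cycle V E S C \<longleftrightarrow> is_cycle V E C \<and> (\<exists>r. subseq S (rotate r C))"

definition longest_S_cycle :: "'a set \<Rightarrow> ('a \<Rightarrow> 'a \<Rightarrow> bool) \<Rightarrow> 'a list \<Rightarrow> 'a list \<Rightarrow> bool" where
  "longest_S_cycle V E S C \<longleftrightarrow> is_S_cycle V E S C \<and>
     (\<forall>C'. is_S_cycle V E S C' \<longrightarrow> length C' \<le> length C)"

end

theory Submission imports Defs begin

lemma cyc_char:
  assumes "C \<noteq> []"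
  shows "(\<forall>i<length C. E (C!i) (succ_idx C i)) \<longleftrightarrow> successively E C \<and> E (last C) (hd C)"
proof
  assume h: "\<forall>i<length C. E (C!i) (succ_idx C i)"
  have "successively E C"
    unfolding successively_conv_nth
  proof (intro allI impI)
    fix i assume "Suc i < length C"
    then have "i < length C" by simp
    with h have "E (C ! i) (succ_idx C i)" by blast
    then have "E (C ! i) (C ! (Suc i mod length C))" by (simp add: succ_idx_def)
    moreover have "Suc i mod length C = Suc i" using \<open>Suc i < length C\<close> by simp
    ultimately
    show "E (C ! i) (C ! Suc i)" by simp
  qed
  moreover have "E (last C) (hd C)"
  proof -
    have "length C - 1 < length C" using assms by simp
    with h have "E (C!(length C - 1)) (C!((length C - 1 + 1) mod length C))"
      by (auto simp: succ_idx_def)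
    moreover have "(length C - 1 + 1) mod length C = 0" using assms by simp
    ultimately show ?thesis using assms by (simp add: last_conv_nth hd_conv_nth)
  qed
  ultimately show "successively E C \<and> E (last C) (hd C)" by simp
next
  assume h: "successively E C \<and> E (last C) (hd C)"
  show "\<forall>i<length C. E (C!i) (succ_idx C i)"
  proof (intro allI impI)
    fix i assume i: "i < length C"
    show "E (C!i) (succ_idx C i)"
    proof (cases "Suc i < length C")
      case True
      then show ?thesis using h successively_nth[of E C i] by (simp add: succ_idx_def)
    next
      case False
      then have "i = length C - 1" using i by simp
      moreover have "(i+1) mod length C = 0" using False i
        by (metis Suc_eq_plus1 less_Suc_eq mod_self not_less_eq)
      ultimately show ?thesis using h assms by (simp add: succ_idx_def last_conv_nth hd_conv_nth)
    qed
  qed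
qed

lemma rot_cycle:
  assumes "is_cycle V E C" shows "is_cycle V E (rotate q C)"
proof -
  have len: "2 \<le> length C" and c: "\<forall>i<length C. E (C!i) (succ_idx C i)"
    using assms by (auto simp: is_cycle_def)
  have "\<forall>i<length (rotate q C). E (rotate q C ! i) (succ_idx (rotate q C) i)"
  proof (intro allI impI)
    fix i assume i: "i < length (rotate q C)"
    let ?c = "length C"
    have i': "i < ?c" using i by simp
    have m: "(i + 1) mod ?c < ?c" using len by (intro mod_less_divisor) auto
    have "rotate q C ! i = C ! ((q+i) mod ?c)" using nth_rotate i' by blast
    moreover have "succ_idx (rotate q C) i = C ! ((q + (i+1) mod ?c) mod ?c)"
      unfolding succ_idx_def using nth_rotate[OF m] by simp
    moreover have "(q + (i+1) mod ?c) mod ?c = ((q+i) mod ?c + 1) mod ?c"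
      by (simp add: mod_add_right_eq mod_Suc_eq)
    moreover have "(q+i) mod ?c < ?c" using len by (intro mod_less_divisor) auto
    ultimately show "E (rotate q C ! i) (succ_idx (rotate q C) i)"
      using c by (simp add: succ_idx_def)
  qed
  then show ?thesis using assms by (simp add: is_cycle_def)
qed

lemma rot_S:
  assumes "subseq S (rotate r C)" shows "\<exists>r'. subseq S (rotate r' (rotate q C))"
proof -
  have "rotate (r + length C * q - q) (rotate q C) = rotate r C"
  proof (cases "C = []")
    case False
    then have "length C * q \<ge> q" by (simp add: Suc_le_eq)
    then have "r + length C * q - q + q = r + length C * q" by linarith
    then have "rotate (r + length C * q - q) (rotate q C) = rotate (r + length C * q) C"
      by (simp add: rotate_rotate)
    also have "\<dots> = rotate r C" by (metis mod_mult_self2 rotate_conv_mod)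
    finally show ?thesis .
  qed simp
  then show ?thesis using assms by metis
qed

lemma insert_path:
  assumes "is_S_cycle V E S C0" "P \<noteq> []" "distinct P" "set P \<subseteq> V - set C0"
    "successively E P" "E (last C0) (hd P)" "E (last P) (hd C0)"
  shows "is_S_cycle V E S (C0 @ P)"
proof -
  have cyc: "is_cycle V E C0" using assms(1) by (simp add: is_S_cycle_def)
  then have ne: "C0 \<noteq> []" and l2: "2 \<le> length C0" by (auto simp: is_cycle_def)
  have "successively E C0 \<and> E (last C0) (hd C0)" using cyc ne cyc_char[OF ne, of E] by (simp add: is_cycle_def)
  then have "successively E (C0 @ P) \<and> E (last (C0@P)) (hd (C0@P))"
    using assms ne by (simp add: successively_append_iff)
  then have cyc2: "is_cycle V E (C0 @ P)"
    using cyc_char[of "C0@P" E] cyc assms l2 by (auto simp: is_cycle_def)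
  obtain r where r: "subseq S (rotate r C0)" using assms(1) by (auto simp: is_S_cycle_def)
  define r0 where "r0 = r mod length C0"
  have r0: "r0 < length C0" using ne r0_def by simp
  have e1: "rotate r C0 = drop r0 C0 @ take r0 C0" by (simp add: rotate_drop_take r0_def)
  have e2: "rotate r0 (C0 @ P) = drop r0 C0 @ P @ take r0 C0"
    using r0 by (simp add: rotate_drop_take)
  have "subseq S (rotate r0 (C0 @ P))" using r e1 e2
    by (metis list_emb_append2 list_emb_append_mono subseq_order.dual_order.trans subseq_order.order_refl)
  then show ?thesis using cyc2 by (auto simp: is_S_cycle_def)
qed

lemma rtranclp_path:
  assumes "R\<^sup>*\<^sup>* u v" "Q v" "\<And>a b. R a b \<Longrightarrow> Q a"
  shows "\<exists>P. P \<noteq> [] \<and> hd P = u \<and> last P = v \<and> distinct P \<and> successively R P \<and> set P \<subseteq> Collect Q"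
  using assms(1)
proof (induction rule: converse_rtranclp_induct)
  case base
  then show ?case using assms(2) by (intro exI[of _ "[v]"]) auto
next
  case (step u w)
  then obtain P where P: "P \<noteq> []" "hd P = w" "last P = v" "distinct P" "successively R P" "set P \<subseteq> Collect Q"
    by blast
  show ?case
  proof (cases "u \<in> set P")
    case True
    then obtain xs ys where eq: "P = xs @ u # ys" by (meson split_list)
    have "successively R (u # ys)" using P(5) eq by (simp add: successively_append_iff)
    moreover have "last (u # ys) = v" using P(3) eq by simp
    ultimately show ?thesis using P eq by (intro exI[of _ "u # ys"]) auto
  next
    case False
    then show ?thesis using P step assms(3)
      by (intro exI[of _ "u # P"]) (auto simp: successively_Cons)
  qed
qed

lemma cl: fixes x :: real shows "x \<le> 2 * of_int \<lceil>x / 2\<rceil>"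
proof -
  have "x / 2 \<le> of_int \<lceil>x / 2\<rceil>" by (rule le_of_int_ceiling)
  then show ?thesis by linarith
qed

locale lsc =
  fixes V :: "'a set" and E :: "'a \<Rightarrow> 'a \<Rightarrow> bool" and S C :: "'a list" and k n :: nat
  assumes dg: "digraph V E" and ncard: "n = card V" and k3: "k \<ge> 3"
    and deg: "min_semideg_ge V E (\<lceil>(real n + real k) / 2\<rceil> - 1)"
    and lon: "longest_S_cycle V E S C"
begin

definition H where "H = V - set C"
definition RH where "RH a b \<longleftrightarrow> E a b \<and> a \<in> H \<and> b \<in> H"

lemma finV: "finite V" using dg by (simp add: digraph_def)
lemma finH: "finite H" using finV by (simp add: H_def)
lemma cycC: "is_cycle V E C" using lon by (simp add: longest_S_cycle_def is_S_cycle_def)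
lemma lenC: "2 \<le> length C" using cycC by (simp add: is_cycle_def)

lemma no_insert:
  assumes j: "j < length C" and "RH\<^sup>*\<^sup>* v u" "u \<in> H"
    and ev: "E (C!j) v" and eu: "E u (C!((j+1) mod length C))"
  shows False
proof -
  obtain P where P: "P \<noteq> []" "hd P = v" "last P = u" "distinct P" "successively RH P" "set P \<subseteq> H"
    using rtranclp_path[of RH v u "\<lambda>x. x \<in> H"] assms by (auto simp: RH_def)
  define C0 where "C0 = rotate (Suc j) C"
  have sc: "is_S_cycle V E S C0"
    using lon rot_cycle rot_S unfolding C0_def longest_S_cycle_def is_S_cycle_def by blast
  have ne: "C \<noteq> []" using lenC by auto
  have hd0: "hd C0 = C!((j+1) mod length C)" unfolding C0_def using hd_rotate_conv_nth[OF ne, of "Suc j"] by (simp del: rotate_Suc)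
  have "last C0 = C0 ! (length C - 1)" unfolding C0_def using ne by (simp add: last_conv_nth)
  also have "\<dots> = C ! ((Suc j + (length C - 1)) mod length C)" unfolding C0_def
    using ne by (intro nth_rotate) simp
  also have "(Suc j + (length C - 1)) mod length C = j"
  proof -
    have "Suc j + (length C - 1) = j + length C" using j by simp
    then show ?thesis using j by simp
  qed
  finally have l0: "last C0 = C!j" .
  have "successively E P" using P(5) by (rule successively_mono) (auto simp: RH_def)
  then have "is_S_cycle V E S (C0 @ P)"
    using insert_path[OF sc P(1) P(4)] P ev eu hd0 l0 by (auto simp: H_def C0_def)
  then have "length (C0 @ P) \<le> length C" using lon unfolding longest_S_cycle_def by blast
  then show False using P(1) by (simp add: C0_def)
qed

lemma dbound: "int n + int k \<le> 2 * \<lceil>(real n + real k) / 2\<rceil>"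
proof -
  have "real n + real k \<le> 2 * of_int \<lceil>(real n + real k) / 2\<rceil>" by (rule cl)
  then have "real_of_int (int n + int k) \<le> real_of_int (2 * \<lceil>(real n + real k) / 2\<rceil>)" by simp
  then show ?thesis by (simp only: of_int_le_iff)
qed

lemma ncH: "n = length C + card H"
proof -
  have "set C \<subseteq> V" using cycC by (simp add: is_cycle_def)
  then have "card V = card (set C) + card H" unfolding H_def using finV
    using card_Diff_subset[of "set C" V] card_mono[of V "set C"] by simp
  moreover have "card (set C) = length C" using cycC by (simp add: is_cycle_def distinct_card)
  ultimately show ?thesis using ncard by simp
qed

lemma KL:
  assumes LH: "L \<subseteq> H" and RHs: "R \<subseteq> H" and "v \<in> L" and "u \<in> R"
    and inc: "\<forall>a\<in>H. \<forall>b\<in>L. E a b \<longrightarrow> a \<in> L"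
    and outc: "\<forall>a\<in>R. \<forall>b\<in>H. E a b \<longrightarrow> b \<in> R"
    and pth: "\<forall>v\<in>L. \<forall>u\<in>R. RH\<^sup>*\<^sup>* v u"
  shows "card H + k \<le> card L + card R"
proof -
  define c where "c = length C"
  have c2: "2 \<le> c" using lenC c_def by simp
  define InS where "InS = {j. j < c \<and> (\<exists>v\<in>L. E (C!j) v)}"
  define OutS where "OutS = {j. j < c \<and> (\<exists>u\<in>R. E u (C!((j+1) mod c)))}"
  have disj: "InS \<inter> OutS = {}"
  proof (rule ccontr)
    assume "InS \<inter> OutS \<noteq> {}"
    then obtain j v' u' where "j < c" "v' \<in> L" "E (C!j) v'" "u' \<in> R" "E u' (C!((j+1) mod c))"
      unfolding InS_def OutS_def by blast
    then show False using no_insert[of j v' u'] pth RHs unfolding c_def by blast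
  qed
  have finIO: "finite InS" "finite OutS" unfolding InS_def OutS_def by auto
  have "card InS + card OutS = card (InS \<union> OutS)" using card_Un_disjoint[OF finIO disj] by simp
  also have "\<dots> \<le> card {..<c}" by (rule card_mono) (auto simp: InS_def OutS_def)
  finally have io: "card InS + card OutS \<le> c" by simp
  have finL: "finite L" and finR: "finite R" using LH RHs finH finite_subset by auto
  have vV: "v \<in> V" and uV: "u \<in> V" using assms H_def by auto
  have d1: "\<lceil>(real n + real k) / 2\<rceil> - 1 \<le> int (indeg V E v)"
    and d2: "\<lceil>(real n + real k) / 2\<rceil> - 1 \<le> int (outdeg V E u)"
    using deg vV uV by (auto simp: min_semideg_ge_def)
  have "{a \<in> V. E a v} \<subseteq> (L - {v}) \<union> (\<lambda>j. C!j) ` InS"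
  proof
    fix a assume a: "a \<in> {a \<in> V. E a v}"
    then have "a \<noteq> v" using dg by (auto simp: digraph_def)
    show "a \<in> (L - {v}) \<union> (\<lambda>j. C!j) ` InS"
    proof (cases "a \<in> set C")
      case True
      then obtain j where "j < c" "C!j = a" by (auto simp: in_set_conv_nth c_def)
      then show ?thesis using a \<open>v \<in> L\<close> by (auto simp: InS_def)
    next
      case False
      then have "a \<in> H" using a by (simp add: H_def)
      then show ?thesis using inc a \<open>v \<in> L\<close> \<open>a \<noteq> v\<close> by blast
    qed
  qed
  then have "indeg V E v \<le> card ((L - {v}) \<union> (\<lambda>j. C!j) ` InS)"
    unfolding indeg_def by (intro card_mono) (use finL finIO in auto)
  also have "\<dots> \<le> card (L - {v}) + card ((\<lambda>j. C!j) ` InS)" by (rule card_Un_le)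
  also have "\<dots> \<le> (card L - 1) + card InS" using card_image_le[OF finIO(1)] \<open>v \<in> L\<close> finL by simp
  finally have i1: "indeg V E v + 1 \<le> card L + card InS" using \<open>v \<in> L\<close> finL card_gt_0_iff[of L]
    by auto
  have "{a \<in> V. E u a} \<subseteq> (R - {u}) \<union> (\<lambda>j. C!((j+1) mod c)) ` OutS"
  proof
    fix a assume a: "a \<in> {a \<in> V. E u a}"
    then have "a \<noteq> u" using dg by (auto simp: digraph_def)
    show "a \<in> (R - {u}) \<union> (\<lambda>j. C!((j+1) mod c)) ` OutS"
    proof (cases "a \<in> set C")
      case True
      then obtain j' where j': "j' < c" "C!j' = a" by (auto simp: in_set_conv_nth c_def)
      define j where "j = (j' + c - 1) mod c"
      have "j < c" using c2 j_def by simp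
      moreover have "(j+1) mod c = j'"
      proof -
        have "(j+1) mod c = (j' + c - 1 + 1) mod c" unfolding j_def by (simp add: mod_Suc_eq)
        also have "j' + c - 1 + 1 = j' + c" using c2 by simp
        finally show ?thesis using j' by simp
      qed
      ultimately show ?thesis using a j' \<open>u \<in> R\<close> unfolding OutS_def by (auto intro!: image_eqI[of _ _ j])
    next
      case False
      then have "a \<in> H" using a by (simp add: H_def)
      then show ?thesis using outc a \<open>u \<in> R\<close> \<open>a \<noteq> u\<close> by blast
    qed
  qed
  then have "outdeg V E u \<le> card ((R - {u}) \<union> (\<lambda>j. C!((j+1) mod c)) ` OutS)"
    unfolding outdeg_def by (intro card_mono) (use finR finIO in auto)
  also have "\<dots> \<le> card (R - {u}) + card ((\<lambda>j. C!((j+1) mod c)) ` OutS)" by (rule card_Un_le)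
  also have "\<dots> \<le> (card R - 1) + card OutS" using card_image_le[OF finIO(2)] \<open>u \<in> R\<close> finR by simp
  finally have i2: "outdeg V E u + 1 \<le> card R + card OutS" using \<open>u \<in> R\<close> finR card_gt_0_iff[of R]
    by auto
  have "int n + int k \<le> 2 * \<lceil>(real n + real k) / 2\<rceil>" by (rule dbound)
  then show ?thesis using d1 d2 i1 i2 io ncH c_def by linarith
qed

lemma RH_H: "RH a b \<Longrightarrow> a \<in> H \<and> b \<in> H" by (simp add: RH_def)

lemma Sym:
  assumes p: "p \<in> H" and q: "q \<in> H" and pq: "RH\<^sup>*\<^sup>* p q" shows "RH\<^sup>*\<^sup>* q p"
proof (rule ccontr)
  assume nqp: "\<not> RH\<^sup>*\<^sup>* q p"
  define L where "L = {v \<in> H. RH\<^sup>*\<^sup>* v p}"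
  define R where "R = {u \<in> H. RH\<^sup>*\<^sup>* q u}"
  have "card H + k \<le> card L + card R"
  proof (rule KL[of L R p q])
    show "\<forall>a\<in>H. \<forall>b\<in>L. E a b \<longrightarrow> a \<in> L" unfolding L_def
      by (auto simp: RH_def intro: converse_rtranclp_into_rtranclp)
    show "\<forall>a\<in>R. \<forall>b\<in>H. E a b \<longrightarrow> b \<in> R" unfolding R_def
      by (auto simp: RH_def intro: rtranclp.rtrancl_into_rtrancl)
    show "\<forall>v\<in>L. \<forall>u\<in>R. RH\<^sup>*\<^sup>* v u" unfolding L_def R_def
      using pq by (auto intro: rtranclp_trans)
  qed (use p q in \<open>auto simp: L_def R_def\<close>)
  moreover have "L \<inter> R = {}" unfolding L_def R_def using nqp by (auto intro: rtranclp_trans)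
  then have "card L + card R = card (L \<union> R)"
    using card_Un_disjoint[of L R] finH finite_subset unfolding L_def R_def by auto
  moreover have "card (L \<union> R) \<le> card H" using finH by (intro card_mono) (auto simp: L_def R_def)
  ultimately show False using k3 by simp
qed

lemma Big:
  assumes p: "p \<in> H" shows "card H + k \<le> 2 * card {u \<in> H. RH\<^sup>*\<^sup>* p u}"
proof -
  define L where "L = {v \<in> H. RH\<^sup>*\<^sup>* v p}"
  define R where "R = {u \<in> H. RH\<^sup>*\<^sup>* p u}"
  have "card H + k \<le> card L + card R"
  proof (rule KL[of L R p p])
    show "\<forall>a\<in>H. \<forall>b\<in>L. E a b \<longrightarrow> a \<in> L" unfolding L_def
      by (auto simp: RH_def intro: converse_rtranclp_into_rtranclp)
    show "\<forall>a\<in>R. \<forall>b\<in>H. E a b \<longrightarrow> b \<in> R" unfolding R_def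
      by (auto simp: RH_def intro: rtranclp.rtrancl_into_rtrancl)
    show "\<forall>v\<in>L. \<forall>u\<in>R. RH\<^sup>*\<^sup>* v u" unfolding L_def R_def
      by (auto intro: rtranclp_trans)
  qed (use p in \<open>auto simp: L_def R_def\<close>)
  moreover have "L \<subseteq> R" unfolding L_def R_def using Sym p by auto
  then have "card L \<le> card R" using finH finite_subset unfolding R_def by (intro card_mono) auto
  ultimately show ?thesis unfolding R_def by simp
qed

lemma Conn:
  assumes p: "p \<in> H" and q: "q \<in> H" shows "RH\<^sup>*\<^sup>* p q"
proof -
  define A where "A = {u \<in> H. RH\<^sup>*\<^sup>* p u}"
  define B where "B = {u \<in> H. RH\<^sup>*\<^sup>* q u}"
  have "A \<inter> B \<noteq> {}"
  proof
    assume d: "A \<inter> B = {}"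
    have "card A + card B = card (A \<union> B)"
      using card_Un_disjoint[OF _ _ d] finH finite_subset unfolding A_def B_def by auto
    also have "\<dots> \<le> card H" using finH by (intro card_mono) (auto simp: A_def B_def)
    finally show False using Big[OF p] Big[OF q] k3 unfolding A_def B_def by linarith
  qed
  then obtain w where "w \<in> H" "RH\<^sup>*\<^sup>* p w" "RH\<^sup>*\<^sup>* q w" unfolding A_def B_def by auto
  then show ?thesis using Sym[OF q] by (meson rtranclp_trans)
qed

end

theorem corollary7:
  fixes V :: "'a set" and E :: "'a \<Rightarrow> 'a \<Rightarrow> bool" and S C :: "'a list" and k n :: nat
  assumes "digraph V E"
    and "n = card V"
    and "k \<ge> 3"
    and "min_semideg_ge V E (\<lceil>(real n + real k) / 2\<rceil> - 1)"
    and "length S = k" and "distinct S" and "set S \<subseteq> V"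
    and "longest_S_cycle V E S C"
    and "set C \<noteq> V"
    and "F = {x \<in> set C. \<exists>h \<in> V - set C. E h x}"
    and "T = {x \<in> set C. \<exists>h \<in> V - set C. E x h}"
  shows "\<forall>i < length C. C ! i \<in> T \<longrightarrow> succ_idx C i \<notin> F"
proof (intro allI impI)
  fix i assume i: "i < length C" and t: "C ! i \<in> T"
  interpret lsc V E S C k n using assms by unfold_locales auto
  show "succ_idx C i \<notin> F"
  proof
    assume "succ_idx C i \<in> F"
    then obtain h2 where h2: "h2 \<in> H" "E h2 (succ_idx C i)" using assms(10) H_def by auto
    obtain h1 where h1: "h1 \<in> H" "E (C!i) h1" using t assms(11) H_def by auto
    show False using no_insert[OF i Conn[OF h1(1) h2(1)] h2(1) h1(2)] h2(2)
      by (simp add: succ_idx_def)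
  qed
qed

end
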